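(* Let $\Gamma$ be a finite connected $3$-valent vertex-transitive graph, let $G=\mathrm{Aut}(\Gamma)$, and suppose that for a vertex $v$ the permutation group induced by $G_v$ on $\Gamma(v)$ is transitive. Let $s\ge1$ be such that $G$ is transitive on $s$-arcs but not on $(s+1)$-arcs. Let $g\in G\setminus\{1\}$ with $\mathrm{fpr}(E\Gamma,g)>1/3$. Then $$2|F(\Gamma,g)|+3|V_1(\Gamma,g)|+|V_3(\Gamma,g)|\le|V\Gamma|.$$
   Context: An $s$-arc is a sequence $(v_0,\dots,v_s)$ of vertices with $v_i\sim v_{i+1}$ and $v_i\ne v_{i+2}$. $\mathrm{fpr}(E\Gamma,g)$ is the proportion of edges $\{a,b\}$ with $\{a^g,b^g\}=\{a,b\}$. $A(\Gamma,g)$ is the set of edges $\{a,b\}$ with $a^g=a$, $b^g=b$; $F(\Gamma,g)$ is the set of edges $\{a,b\}$ with $a^g=b$, $b^g=a$, $a\ne b$. $\Gamma[g]$ is the subgraph with edge set $A(\Gamma,g)$ and vertex set the vertices incident with edges of $A(\Gamma,g)$; its vertices have valency $1$ or $3$ in $\Gamma[g]$, and $V_i(\Gamma,g)$, $i\in\{1,3\}$, is the set of vertices of $\Gamma[g]$ of valency $i$ in $\Gamma[g]$. *)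

theory Defs
  imports Complex_Main
begin

definition simple_graph :: "'a set \<Rightarrow> ('a \<Rightarrow> 'a \<Rightarrow> bool) \<Rightarrow> bool" where
  "simple_graph V E \<longleftrightarrow> finite V \<and> (\<forall>a b. E a b \<longrightarrow> a \<in> V \<and> b \<in> V)
     \<and> (\<forall>a b. E a b \<longrightarrow> E b a) \<and> (\<forall>a. \<not> E a a)"

definition connected_graph :: "'a set \<Rightarrow> ('a \<Rightarrow> 'a \<Rightarrow> bool) \<Rightarrow> bool" where
  "connected_graph V E \<longleftrightarrow> (\<forall>u\<in>V. \<forall>w\<in>V. E\<^sup>*\<^sup>* u w)"

definition nbhd :: "('a \<Rightarrow> 'a \<Rightarrow> bool) \<Rightarrow> 'a \<Rightarrow> 'a set" where
  "nbhd E v = {w. E v w}"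

definition cubic :: "'a set \<Rightarrow> ('a \<Rightarrow> 'a \<Rightarrow> bool) \<Rightarrow> bool" where
  "cubic V E \<longleftrightarrow> (\<forall>v\<in>V. card (nbhd E v) = 3)"

definition Aut :: "'a set \<Rightarrow> ('a \<Rightarrow> 'a \<Rightarrow> bool) \<Rightarrow> ('a \<Rightarrow> 'a) set" where
  "Aut V E = {g. bij_betw g V V \<and> (\<forall>x. x \<notin> V \<longrightarrow> g x = x)
                 \<and> (\<forall>a\<in>V. \<forall>b\<in>V. E a b \<longleftrightarrow> E (g a) (g b))}"

definition vertex_transitive :: "'a set \<Rightarrow> ('a \<Rightarrow> 'a \<Rightarrow> bool) \<Rightarrow> bool" where
  "vertex_transitive V E \<longleftrightarrow> (\<forall>u\<in>V. \<forall>w\<in>V. \<exists>g\<in>Aut V E. g u = w)"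

definition arcs :: "'a set \<Rightarrow> ('a \<Rightarrow> 'a \<Rightarrow> bool) \<Rightarrow> nat \<Rightarrow> 'a list set" where
  "arcs V E s = {xs. length xs = s + 1 \<and> set xs \<subseteq> V
      \<and> (\<forall>i<s. E (xs ! i) (xs ! (i + 1)))
      \<and> (\<forall>i. i + 2 \<le> s \<longrightarrow> xs ! i \<noteq> xs ! (i + 2))}"

definition arc_transitive :: "'a set \<Rightarrow> ('a \<Rightarrow> 'a \<Rightarrow> bool) \<Rightarrow> nat \<Rightarrow> bool" where
  "arc_transitive V E s \<longleftrightarrow>
     (\<forall>x\<in>arcs V E s. \<forall>y\<in>arcs V E s. \<exists>g\<in>Aut V E. map g x = y)"

definition edges :: "'a set \<Rightarrow> ('a \<Rightarrow> 'a \<Rightarrow> bool) \<Rightarrow> 'a set set" where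
  "edges V E = {{a, b} | a b. a \<in> V \<and> b \<in> V \<and> E a b}"

definition fpr_edges :: "'a set \<Rightarrow> ('a \<Rightarrow> 'a \<Rightarrow> bool) \<Rightarrow> ('a \<Rightarrow> 'a) \<Rightarrow> real" where
  "fpr_edges V E g = real (card {e \<in> edges V E. g ` e = e}) / real (card (edges V E))"

definition A_edges :: "'a set \<Rightarrow> ('a \<Rightarrow> 'a \<Rightarrow> bool) \<Rightarrow> ('a \<Rightarrow> 'a) \<Rightarrow> 'a set set" where
  "A_edges V E g = {{a, b} | a b. a \<in> V \<and> b \<in> V \<and> E a b \<and> g a = a \<and> g b = b}"

definition F_edges :: "'a set \<Rightarrow> ('a \<Rightarrow> 'a \<Rightarrow> bool) \<Rightarrow> ('a \<Rightarrow> 'a) \<Rightarrow> 'a set set" where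
  "F_edges V E g = {{a, b} | a b. a \<in> V \<and> b \<in> V \<and> E a b \<and> g a = b \<and> g b = a \<and> a \<noteq> b}"

definition fix_valency :: "'a set \<Rightarrow> ('a \<Rightarrow> 'a \<Rightarrow> bool) \<Rightarrow> ('a \<Rightarrow> 'a) \<Rightarrow> 'a \<Rightarrow> nat" where
  "fix_valency V E g v = card {e \<in> A_edges V E g. v \<in> e}"

definition Vi :: "'a set \<Rightarrow> ('a \<Rightarrow> 'a \<Rightarrow> bool) \<Rightarrow> ('a \<Rightarrow> 'a) \<Rightarrow> nat \<Rightarrow> 'a set" where
  "Vi V E g i = {v \<in> V. (\<exists>e\<in>A_edges V E g. v \<in> e) \<and> fix_valency V E g v = i}"

end

theory Submission
  imports Defs
begin

locale cg =
  fixes V :: "'a set" and E :: "'a \<Rightarrow> 'a \<Rightarrow> bool"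
  assumes sg: "simple_graph V E" and conn: "connected_graph V E" and cub: "cubic V E"
begin

lemma finV: "finite V" using sg by (simp add: simple_graph_def)
lemma EV: "E a b \<Longrightarrow> a \<in> V \<and> b \<in> V" using sg by (simp add: simple_graph_def)
lemma Esym: "E a b \<Longrightarrow> E b a" using sg by (simp add: simple_graph_def)
lemma Eirr: "\<not> E a a" using sg by (simp add: simple_graph_def)
lemma nb3: "x \<in> V \<Longrightarrow> card (nbhd E x) = 3" using cub by (simp add: cubic_def)
lemma nbfin: "x \<in> V \<Longrightarrow> finite (nbhd E x)" using nb3 card.infinite by fastforce
lemma nbsub: "nbhd E x \<subseteq> V" using EV by (auto simp: nbhd_def)
lemma nbE[simp]: "w \<in> nbhd E x \<longleftrightarrow> E x w" by (simp add: nbhd_def)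

lemma nb_third:
  assumes "x \<in> V" shows "\<exists>t. E x t \<and> t \<noteq> a \<and> t \<noteq> b"
proof -
  have c2: "card {a,b} \<le> 2" by (simp add: card_insert_le_m1)
  have "card (nbhd E x) - card {a,b} \<le> card (nbhd E x - {a, b})"
    by (rule diff_card_le_card_Diff) simp
  then have "card (nbhd E x - {a, b}) \<ge> 1" using nb3[OF assms] c2 by linarith
  then have "nbhd E x - {a,b} \<noteq> {}" by (metis card.empty not_one_le_zero)
  then show ?thesis by auto
qed

lemma Aut_bij: assumes "h \<in> Aut V E" shows "bij h"
proof -
  have b: "bij_betw h V V" and o: "\<And>x. x \<notin> V \<Longrightarrow> h x = x" using assms by (auto simp: Aut_def)
  have io: "inj_on h V" using b by (rule bij_betw_imp_inj_on)
  have im: "h ` V = V" using b by (rule bij_betw_imp_surj_on)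
  have hv: "\<And>x. x \<in> V \<Longrightarrow> h x \<in> V" using im by auto
  have "inj h"
  proof (rule injI)
    fix x y assume xy: "h x = h y"
    show "x = y"
    proof (cases "x \<in> V")
      case True
      show ?thesis
      proof (cases "y \<in> V")
        case True
        with \<open>x \<in> V\<close> xy io show ?thesis by (simp add: inj_on_def)
      next
        case False
        then have "h y = y" by (rule o)
        with hv[OF \<open>x \<in> V\<close>] xy False show ?thesis by simp
      qed
    next
      case False
      then have hx: "h x = x" by (rule o)
      show ?thesis
      proof (cases "y \<in> V")
        case True
        with hv[OF True] xy hx False show ?thesis by simp
      next
        case False
        with o[OF False] xy hx show ?thesis by simp
      qed
    qed
  qed
  moreover have "surj h"
  proof -
    { fix y have "y \<in> range h"
      proof (cases "y \<in> V")
        case True then have "y \<in> h ` V" using im by simp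
        then show ?thesis by auto
      next
        case False then have "h y = y" by (rule o)
        then show ?thesis by (metis rangeI)
      qed }
    then show ?thesis by auto
  qed
  ultimately show ?thesis by (simp add: bij_def)
qed

lemma Aut_V: "h \<in> Aut V E \<Longrightarrow> x \<in> V \<Longrightarrow> h x \<in> V"
  unfolding Aut_def using bij_betw_apply by fastforce
lemma Aut_inj: "h \<in> Aut V E \<Longrightarrow> h x = h y \<longleftrightarrow> x = y"
proof -
  assume "h \<in> Aut V E"
  then have "inj h" using Aut_bij bij_is_inj by blast
  then show ?thesis by (simp add: inj_eq)
qed
lemma Aut_E: "h \<in> Aut V E \<Longrightarrow> E a b \<Longrightarrow> E (h a) (h b)"
proof -
  assume h: "h \<in> Aut V E" and e: "E a b"
  then have "a \<in> V" "b \<in> V" using EV by auto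
  with h e show ?thesis unfolding Aut_def by blast
qed
lemma Aut_E_iff: "h \<in> Aut V E \<Longrightarrow> a \<in> V \<Longrightarrow> b \<in> V \<Longrightarrow> E (h a) (h b) \<longleftrightarrow> E a b"
  unfolding Aut_def by blast


lemma Aut_out: "h \<in> Aut V E \<Longrightarrow> x \<notin> V \<Longrightarrow> h x = x"
  unfolding Aut_def by blast

lemma Aut_comp: assumes "h \<in> Aut V E" "k \<in> Aut V E" shows "h \<circ> k \<in> Aut V E"
proof -
  have "bij_betw h V V" "bij_betw k V V" using assms by (auto simp: Aut_def)
  then have "bij_betw (h \<circ> k) V V" by (rule bij_betw_trans[rotated])
  moreover have "\<forall>x. x \<notin> V \<longrightarrow> (h \<circ> k) x = x" using Aut_out[OF assms(1)] Aut_out[OF assms(2)] by simp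
  moreover have "\<forall>a\<in>V. \<forall>b\<in>V. E a b \<longleftrightarrow> E ((h \<circ> k) a) ((h \<circ> k) b)"
    using Aut_E_iff[OF assms(1)] Aut_E_iff[OF assms(2)] Aut_V[OF assms(2)] by simp
  ultimately show ?thesis unfolding Aut_def by blast
qed

lemma Aut_inv: assumes "h \<in> Aut V E" shows "inv h \<in> Aut V E"
proof -
  have bh: "bij h" by (rule Aut_bij[OF assms])
  have b: "bij_betw h V V" using assms by (auto simp: Aut_def)
  have i: "\<And>y. h (inv h y) = y" using bh by (simp add: bij_is_surj surj_f_inv_f)
  have i2: "\<And>y. inv h (h y) = y" using bh by (simp add: bij_is_inj)
  have oi: "\<And>x. x \<notin> V \<Longrightarrow> inv h x = x" using Aut_out[OF assms] i2 by metis
  have iv: "\<And>x. x \<in> V \<Longrightarrow> inv h x \<in> V"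
  proof -
    fix x assume "x \<in> V"
    show "inv h x \<in> V"
    proof (rule ccontr)
      assume "inv h x \<notin> V"
      then have "h (inv h x) = inv h x" by (rule Aut_out[OF assms])
      then have "x = inv h x" using i by simp
      with \<open>x \<in> V\<close> \<open>inv h x \<notin> V\<close> show False by simp
    qed
  qed
  have bi: "bij_betw (inv h) V V"
    by (rule bij_betw_byWitness[where f'=h]) (auto simp: i i2 iv Aut_V[OF assms])
  have "\<And>a b. a \<in> V \<Longrightarrow> b \<in> V \<Longrightarrow> E a b \<longleftrightarrow> E (inv h a) (inv h b)"
  proof -
    fix a b assume "a \<in> V" "b \<in> V"
    have "E (h (inv h a)) (h (inv h b)) \<longleftrightarrow> E (inv h a) (inv h b)"
      by (rule Aut_E_iff[OF assms iv[OF \<open>a \<in> V\<close>] iv[OF \<open>b \<in> V\<close>]])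
    then show "E a b \<longleftrightarrow> E (inv h a) (inv h b)" using i by simp
  qed
  then show ?thesis using bi oi by (simp add: Aut_def)
qed

lemma Aut_inv_apply: "h \<in> Aut V E \<Longrightarrow> inv h (h x) = x"
  using Aut_bij bij_is_inj inv_f_f by metis

lemma Aut_id: "h \<in> Aut V E \<Longrightarrow> \<forall>x\<in>V. h x = x \<Longrightarrow> h = id"
  by (rule ext) (auto simp: Aut_out)

lemma Aut_nbhd: assumes "h \<in> Aut V E" "x \<in> V" shows "h ` nbhd E x = nbhd E (h x)"
proof
  show "h ` nbhd E x \<subseteq> nbhd E (h x)" using Aut_E[OF assms(1)] by auto
  show "nbhd E (h x) \<subseteq> h ` nbhd E x"
  proof
    fix y assume "y \<in> nbhd E (h x)"
    then have e: "E (h x) y" by simp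
    then have yV: "y \<in> V" using EV by auto
    have "y = h (inv h y)" using Aut_bij[OF assms(1)] by (simp add: bij_is_surj surj_f_inv_f)
    moreover have iv: "inv h y \<in> V" using Aut_inv[OF assms(1)] yV Aut_V by blast
    ultimately have "E x (inv h y)" using Aut_E_iff[OF assms(1) assms(2) iv] e by simp
    with \<open>y = h (inv h y)\<close> show "y \<in> h ` nbhd E x" by auto
  qed
qed


lemma arcs_iff: "xs \<in> arcs V E t \<longleftrightarrow> length xs = t + 1 \<and> set xs \<subseteq> V
      \<and> (\<forall>i<t. E (xs ! i) (xs ! (i + 1)))
      \<and> (\<forall>i. i + 2 \<le> t \<longrightarrow> xs ! i \<noteq> xs ! (i + 2))"
  by (simp add: arcs_def)

lemma arc_map: assumes "h \<in> Aut V E" "xs \<in> arcs V E t" shows "map h xs \<in> arcs V E t"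
proof -
  from assms(2) have l: "length xs = t + 1" and s: "set xs \<subseteq> V"
    and e: "\<forall>i<t. E (xs ! i) (xs ! (i + 1))" and n: "\<forall>i. i + 2 \<le> t \<longrightarrow> xs ! i \<noteq> xs ! (i + 2)"
    by (auto simp: arcs_iff)
  have "set (map h xs) \<subseteq> V" using s Aut_V[OF assms(1)] by auto
  moreover have "\<forall>i<t. E (map h xs ! i) (map h xs ! (i + 1))"
    using e l Aut_E[OF assms(1)] by simp
  moreover have "\<forall>i. i + 2 \<le> t \<longrightarrow> map h xs ! i \<noteq> map h xs ! (i + 2)"
    using n l Aut_inj[OF assms(1)] by simp
  ultimately show ?thesis using l by (simp add: arcs_iff)
qed

lemma arc_take: assumes "xs \<in> arcs V E u" "t \<le> u" shows "take (t+1) xs \<in> arcs V E t"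
  using assms unfolding arcs_iff
  by (auto dest: in_set_takeD)

lemma arc_snoc: assumes "xs \<in> arcs V E t" "E (xs!t) w" "t \<ge> 1 \<Longrightarrow> w \<noteq> xs!(t-1)"
  shows "xs @ [w] \<in> arcs V E (Suc t)"
proof -
  from assms(1) have l: "length xs = t + 1" and s: "set xs \<subseteq> V"
    and e: "\<forall>i<t. E (xs ! i) (xs ! (i + 1))" and n: "\<forall>i. i + 2 \<le> t \<longrightarrow> xs ! i \<noteq> xs ! (i + 2)"
    by (auto simp: arcs_iff)
  have wV: "w \<in> V" using assms(2) EV by auto
  have "\<forall>i<Suc t. E ((xs@[w]) ! i) ((xs@[w]) ! (i + 1))"
  proof (intro allI impI)
    fix i assume "i < Suc t"
    then show "E ((xs@[w]) ! i) ((xs@[w]) ! (i + 1))"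
      using e l assms(2) by (cases "i = t") (auto simp: nth_append)
  qed
  moreover have "\<forall>i. i + 2 \<le> Suc t \<longrightarrow> (xs@[w]) ! i \<noteq> (xs@[w]) ! (i + 2)"
  proof (intro allI impI)
    fix i assume "i + 2 \<le> Suc t"
    then show "(xs@[w]) ! i \<noteq> (xs@[w]) ! (i + 2)"
      using n l assms(3) by (cases "i + 1 = t") (auto simp: nth_append)
  qed
  ultimately show ?thesis using l s wV by (simp add: arcs_iff)
qed

lemma arc_ext: assumes "xs \<in> arcs V E t" shows "\<exists>w. xs @ [w] \<in> arcs V E (Suc t)"
proof -
  have l: "length xs = t + 1" and s: "set xs \<subseteq> V" using assms by (auto simp: arcs_iff)
  then have "xs ! t \<in> V" by (metis less_add_one nth_mem subsetD)
  then obtain w where w: "E (xs!t) w" "w \<noteq> xs!(t-1)" using nb_third by blast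
  show ?thesis using arc_snoc[OF assms w(1)] w(2) by blast
qed

lemma arc_ext_le: assumes "xs \<in> arcs V E t" "t \<le> u" shows "\<exists>ys \<in> arcs V E u. take (t+1) ys = xs"
  using assms(2)
proof (induction u)
  case 0
  then show ?case using assms(1) by (auto simp: arcs_iff)
next
  case (Suc u)
  show ?case
  proof (cases "t = Suc u")
    case True
    then show ?thesis using assms(1) by (auto simp: arcs_iff)
  next
    case False
    then have "t \<le> u" using Suc.prems by simp
    then obtain ys where ys: "ys \<in> arcs V E u" "take (t+1) ys = xs" using Suc.IH by blast
    obtain w where w: "ys @ [w] \<in> arcs V E (Suc u)" using arc_ext[OF ys(1)] by blast
    have "length ys = u + 1" using ys(1) by (simp add: arcs_iff)
    then have "take (t+1) (ys @ [w]) = xs" using ys(2) \<open>t \<le> u\<close> by simp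
    then show ?thesis using w by blast
  qed
qed

lemma trans_le: assumes "arc_transitive V E u" "t \<le> u" shows "arc_transitive V E t"
  unfolding arc_transitive_def
proof (intro ballI)
  fix x y assume x: "x \<in> arcs V E t" and y: "y \<in> arcs V E t"
  obtain X where X: "X \<in> arcs V E u" "take (t+1) X = x" using arc_ext_le[OF x assms(2)] by blast
  obtain Y where Y: "Y \<in> arcs V E u" "take (t+1) Y = y" using arc_ext_le[OF y assms(2)] by blast
  obtain h where h: "h \<in> Aut V E" "map h X = Y" using assms(1) X(1) Y(1) unfolding arc_transitive_def by blast
  have "map h x = take (t+1) (map h X)" using X(2) by (simp add: take_map)
  also have "\<dots> = y" using h(2) Y(2) by simp
  finally show "\<exists>g\<in>Aut V E. map g x = y" using h(1) by blast
qed


lemma arc_rev: assumes "xs \<in> arcs V E t" shows "rev xs \<in> arcs V E t"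
proof -
  from assms have l: "length xs = t + 1" and s: "set xs \<subseteq> V"
    and e: "\<forall>i<t. E (xs ! i) (xs ! (i + 1))" and n: "\<forall>i. i + 2 \<le> t \<longrightarrow> xs ! i \<noteq> xs ! (i + 2)"
    by (auto simp: arcs_iff)
  have r: "\<And>i. i \<le> t \<Longrightarrow> rev xs ! i = xs ! (t - i)" using l by (simp add: rev_nth)
  have "\<forall>i<t. E (rev xs ! i) (rev xs ! (i + 1))"
  proof (intro allI impI)
    fix i assume i: "i < t"
    have "E (xs ! (t - i - 1)) (xs ! (t - i - 1 + 1))" using e i by simp
    moreover have "t - i - 1 + 1 = t - i" using i by simp
    ultimately show "E (rev xs ! i) (rev xs ! (i + 1))" using r i Esym
      by (metis Suc_eq_plus1 Suc_leI diff_diff_left less_imp_le_nat)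
  qed
  moreover have "\<forall>i. i + 2 \<le> t \<longrightarrow> rev xs ! i \<noteq> rev xs ! (i + 2)"
  proof (intro allI impI)
    fix i assume i: "i + 2 \<le> t"
    have "xs ! (t - i - 2) \<noteq> xs ! (t - i - 2 + 2)" using n i by simp
    moreover have "t - i - 2 + 2 = t - i" using i by simp
    ultimately show "rev xs ! i \<noteq> rev xs ! (i + 2)" using r i
      by (metis add_leD1 diff_diff_left)
  qed
  ultimately show ?thesis using l s by (simp add: arcs_iff)
qed

lemma arc_tl: assumes "ys \<in> arcs V E (Suc t)" shows "tl ys \<in> arcs V E t"
  using assms unfolding arcs_iff
  by (auto simp: nth_tl dest: list.set_sel(2)[rotated])

lemma arc_shift: assumes "xs \<in> arcs V E s" "s \<ge> 1" "E (xs!s) w" "w \<noteq> xs!(s-1)"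
  shows "tl xs @ [w] \<in> arcs V E s"
proof -
  have "xs @ [w] \<in> arcs V E (Suc s)" using arc_snoc[OF assms(1,3)] assms(4) by blast
  then have "tl (xs @ [w]) \<in> arcs V E s" by (rule arc_tl)
  moreover have "xs \<noteq> []" using assms(1) by (auto simp: arcs_iff)
  ultimately show ?thesis by simp
qed


context
  fixes s :: nat and g :: "'a \<Rightarrow> 'a"
  assumes s1: "s \<ge> 1" and tr: "arc_transitive V E s" and ntr: "\<not> arc_transitive V E (s + 1)"
    and gA: "g \<in> Aut V E"
begin

definition P :: "'a list \<Rightarrow> bool" where
  "P xs \<longleftrightarrow> xs \<in> arcs V E s \<and> (\<forall>z\<in>set xs. g z = z)"

lemma step1: assumes "P \<beta>" "E (\<beta>!s) w" "w \<noteq> \<beta>!(s-1)" shows "g w = w"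
proof (rule ccontr)
  assume gw: "g w \<noteq> w"
  have ba: "\<beta> \<in> arcs V E s" and bf: "\<forall>z\<in>set \<beta>. g z = z" using assms(1) by (auto simp: P_def)
  have lb: "length \<beta> = s + 1" using ba by (simp add: arcs_iff)
  have gs: "g (\<beta>!s) = \<beta>!s" using bf lb by simp
  have gs1: "g (\<beta>!(s-1)) = \<beta>!(s-1)" using bf lb by simp
  have bsV: "\<beta>!s \<in> V" using assms(2) EV by auto
  have "\<forall>i<s. E (\<beta> ! i) (\<beta> ! (i + 1))" using ba by (simp add: arcs_iff)
  then have "E (\<beta>!(s-1)) (\<beta>!(s-1+1))" using s1 by (metis diff_less zero_less_one less_le_trans)
  then have e1: "E (\<beta>!s) (\<beta>!(s-1))" using s1 Esym by simp
  define N where "N = nbhd E (\<beta>!s) - {\<beta>!(s-1)}"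
  have finN: "finite N" using nbfin[OF bsV] by (simp add: N_def)
  have cN: "card N = 2" using nb3[OF bsV] e1 nbfin[OF bsV] by (simp add: N_def card_Diff_singleton)
  have gN: "\<And>u. u \<in> N \<Longrightarrow> g u \<in> N"
  proof -
    fix u assume "u \<in> N"
    then have "E (\<beta>!s) u" "u \<noteq> \<beta>!(s-1)" by (auto simp: N_def)
    then have "E (\<beta>!s) (g u)" "g u \<noteq> \<beta>!(s-1)"
      using Aut_E[OF gA] gs gs1 Aut_inj[OF gA] by (metis, metis)
    then show "g u \<in> N" by (simp add: N_def)
  qed
  have wN: "w \<in> N" using assms(2,3) by (simp add: N_def)
  have Nw: "N = {w, g w}"
  proof -
    have "{w, g w} \<subseteq> N" using wN gN by simp
    moreover have "card {w, g w} = 2" using gw by simp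
    ultimately show ?thesis using cN finN by (metis card_seteq order_refl)
  qed
  have ggw: "g (g w) = w"
  proof -
    have "g (g w) \<in> N" using gN wN by blast
    moreover have "g (g w) \<noteq> g w" using gw Aut_inj[OF gA] by simp
    ultimately show ?thesis using Nw by blast
  qed
  have key: "\<And>u1 u2. u1 \<in> N \<Longrightarrow> u2 \<in> N \<Longrightarrow> u2 = u1 \<or> u2 = g u1"
    using Nw ggw by auto
  have ext: "\<And>X. X \<in> arcs V E (Suc s) \<Longrightarrow> \<exists>a\<in>Aut V E. \<exists>u\<in>N. map a X = \<beta> @ [u]"
  proof -
    fix X assume X: "X \<in> arcs V E (Suc s)"
    have lX: "length X = s + 2" using X by (simp add: arcs_iff)
    have "take (s+1) X \<in> arcs V E s" using arc_take[OF X] by simp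
    then obtain a where a: "a \<in> Aut V E" "map a (take (s+1) X) = \<beta>"
      using tr ba unfolding arc_transitive_def by blast
    have Xs: "X = take (s+1) X @ [X!(s+1)]"
      using take_Suc_conv_app_nth[of "s+1" X] lX by simp
    have mX: "map a X = \<beta> @ [a (X!(s+1))]" using a(2) Xs by (metis list.map(1) list.map(2) map_append)
    have as: "a (X!s) = \<beta>!s"
    proof -
      have "\<beta>!s = map a (take (s+1) X) ! s" using a(2) by simp
      also have "\<dots> = a (X!s)" using lX by simp
      finally show ?thesis by simp
    qed
    have as1: "a (X!(s-1)) = \<beta>!(s-1)"
    proof -
      have "\<beta>!(s-1) = map a (take (s+1) X) ! (s-1)" using a(2) by simp
      also have "\<dots> = a (X!(s-1))" using lX s1 by simp
      finally show ?thesis by simp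
    qed
    have "E (X!s) (X!(s+1))" using X by (simp add: arcs_iff)
    then have e2: "E (\<beta>!s) (a (X!(s+1)))" using Aut_E[OF a(1)] as by metis
    moreover have hX: "\<forall>i. i + 2 \<le> Suc s \<longrightarrow> X ! i \<noteq> X ! (i + 2)" using X unfolding arcs_iff by blast
    have "s - 1 + 2 \<le> Suc s" using s1 by simp
    with hX have "X!(s-1) \<noteq> X!(s-1+2)" by blast
    moreover have "s - 1 + 2 = s + 1" using s1 by simp
    ultimately have "X!(s-1) \<noteq> X!(s+1)" by simp
    then have "a (X!(s+1)) \<noteq> \<beta>!(s-1)" using as1 Aut_inj[OF a(1)] by metis
    with e2 have "a (X!(s+1)) \<in> N" by (simp add: N_def)
    then show "\<exists>a\<in>Aut V E. \<exists>u\<in>N. map a X = \<beta> @ [u]" using a(1) mX by blast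
  qed
  have mgb: "map g \<beta> = \<beta>" using bf by (simp add: map_idI)
  have "arc_transitive V E (Suc s)"
    unfolding arc_transitive_def
  proof (intro ballI)
    fix X Y assume X: "X \<in> arcs V E (Suc s)" and Y: "Y \<in> arcs V E (Suc s)"
    obtain a u1 where a: "a \<in> Aut V E" "u1 \<in> N" "map a X = \<beta> @ [u1]" using ext[OF X] by blast
    obtain b u2 where b: "b \<in> Aut V E" "u2 \<in> N" "map b Y = \<beta> @ [u2]" using ext[OF Y] by blast
    have ci: "map (inv b) (map b Y) = Y" using Aut_inv_apply[OF b(1)] by (simp add: map_idI)
    show "\<exists>h\<in>Aut V E. map h X = Y"
    proof (cases "u2 = u1")
      case True
      have "map (inv b \<circ> a) X = map (inv b) (map a X)" by simp
      also have "\<dots> = map (inv b) (map b Y)" using a(3) b(3) True by simp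
      also have "\<dots> = Y" by (rule ci)
      finally have "map (inv b \<circ> a) X = Y" .
      moreover have "inv b \<circ> a \<in> Aut V E" using Aut_comp Aut_inv a(1) b(1) by blast
      ultimately show ?thesis by blast
    next
      case False
      then have u2: "u2 = g u1" using key[OF a(2) b(2)] by simp
      have "map (inv b \<circ> g \<circ> a) X = map (inv b) (map g (\<beta> @ [u1]))" using a(3) by (simp flip: map_map)
      also have "\<dots> = map (inv b) (map b Y)" using mgb u2 b(3) by simp
      also have "\<dots> = Y" by (rule ci)
      finally have "map (inv b \<circ> g \<circ> a) X = Y" .
      moreover have "inv b \<circ> g \<circ> a \<in> Aut V E" using Aut_comp Aut_inv a(1) b(1) gA by blast
      ultimately show ?thesis by blast
    qed
  qed
  then show False using ntr by simp
qed

lemma Pshift: assumes "P \<beta>" "E (\<beta>!s) w" "w \<noteq> \<beta>!(s-1)" shows "P (tl \<beta> @ [w])"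
proof -
  have "g w = w" by (rule step1[OF assms])
  moreover have "tl \<beta> @ [w] \<in> arcs V E s" using arc_shift assms s1 by (auto simp: P_def)
  moreover have "set (tl \<beta>) \<subseteq> set \<beta>" by (rule list.set_sel(2)[THEN subsetI, rotated]) (auto)
  ultimately show ?thesis using assms(1) unfolding P_def by auto
qed

lemma Plen: "P \<beta> \<Longrightarrow> length \<beta> = s + 1" by (simp add: P_def arcs_iff)

lemma Prev: "P \<beta> \<Longrightarrow> P (rev \<beta>)" by (simp add: P_def arc_rev)

lemma kshift: assumes "P \<beta>" "k \<le> s" shows "\<exists>\<gamma>. P \<gamma> \<and> take (s+1-k) \<gamma> = drop k \<beta>"
  using assms(2)
proof (induction k)
  case 0
  then show ?case using assms(1) Plen by auto
next
  case (Suc k)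
  then obtain \<gamma> where g: "P \<gamma>" "take (s+1-k) \<gamma> = drop k \<beta>" by auto
  have lg: "length \<gamma> = s + 1" using Plen[OF g(1)] .
  have "\<gamma>!s \<in> V" using g(1) lg unfolding P_def arcs_iff by (metis less_add_one nth_mem subsetD)
  then obtain w where w: "E (\<gamma>!s) w" "w \<noteq> \<gamma>!(s-1)" using nb_third by blast
  have P': "P (tl \<gamma> @ [w])" by (rule Pshift[OF g(1) w])
  have "take (s - k) (tl \<gamma> @ [w]) = take (s - k) (tl \<gamma>)" using lg by simp
  also have "\<dots> = tl (take (Suc (s - k)) \<gamma>)" by (rule take_tl)
  also have "Suc (s - k) = s + 1 - k" using Suc.prems by simp
  also have "tl (take (s + 1 - k) \<gamma>) = tl (drop k \<beta>)" using g(2) by simp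
  also have "\<dots> = drop (Suc k) \<beta>" by (simp add: drop_Suc tl_drop)
  finally have "take (s + 1 - Suc k) (tl \<gamma> @ [w]) = drop (Suc k) \<beta>" by simp
  then show ?case using P' by blast
qed

lemma Pend: assumes "P \<beta>" "x \<in> set \<beta>" shows "\<exists>\<gamma>. P \<gamma> \<and> last \<gamma> = x"
proof -
  have lb: "length \<beta> = s + 1" using Plen[OF assms(1)] .
  obtain i where i: "i < s + 1" "\<beta>!i = x" using assms(2) lb by (metis in_set_conv_nth)
  obtain \<gamma> where g: "P \<gamma>" "take (s+1-(s-i)) \<gamma> = drop (s-i) (rev \<beta>)"
    using kshift[OF Prev[OF assms(1)], of "s-i"] by auto
  have lg: "length \<gamma> = s + 1" using Plen[OF g(1)] .
  have "\<gamma>!0 = take (s+1-(s-i)) \<gamma> ! 0" using i by simp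
  also have "\<dots> = drop (s-i) (rev \<beta>) ! 0" using g(2) by simp
  also have "\<dots> = rev \<beta> ! (s - i)" using lb i by simp
  also have "\<dots> = \<beta> ! i" using lb i by (simp add: rev_nth)
  finally have "\<gamma>!0 = x" using i by simp
  moreover have "last (rev \<gamma>) = \<gamma>!0"
  proof -
    have "\<gamma> \<noteq> []" using lg by auto
    then show ?thesis by (simp add: last_rev hd_conv_nth)
  qed
  ultimately show ?thesis using Prev[OF g(1)] by metis
qed

lemma Dclos: assumes "P \<gamma>" "last \<gamma> = x" "E x z" shows "\<exists>\<gamma>'. P \<gamma>' \<and> last \<gamma>' = z"
proof -
  have lg: "length \<gamma> = s + 1" using Plen[OF assms(1)] .
  have lx: "\<gamma>!s = x"
  proof -
    have "\<gamma> \<noteq> []" using lg by auto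
    then have "last \<gamma> = \<gamma>!(length \<gamma> - 1)" by (rule last_conv_nth)
    then show ?thesis using assms(2) lg by simp
  qed
  show ?thesis
  proof (cases "z = \<gamma>!(s-1)")
    case True
    then have "z \<in> set \<gamma>" using lg by simp
    then show ?thesis using Pend[OF assms(1)] by blast
  next
    case False
    have "P (tl \<gamma> @ [z])" using Pshift[OF assms(1)] lx assms(3) False by simp
    then show ?thesis by (metis last_snoc)
  qed
qed

lemma REG: assumes "P \<alpha>" shows "g = id"
proof -
  have la: "length \<alpha> = s + 1" using Plen[OF assms] .
  have aV: "last \<alpha> \<in> V" using assms la unfolding P_def arcs_iff
    by (metis last_in_set list.size(3) subsetD add_is_0 one_neq_zero)
  have "\<forall>y\<in>V. g y = y"
  proof
    fix y assume "y \<in> V"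
    then have "E\<^sup>*\<^sup>* (last \<alpha>) y" using conn aV by (simp add: connected_graph_def)
    then have "\<exists>\<gamma>. P \<gamma> \<and> last \<gamma> = y"
    proof (induction rule: rtranclp_induct)
      case base then show ?case using assms by blast
    next
      case (step y z)
      then show ?case using Dclos by blast
    qed
    then obtain \<gamma> where "P \<gamma>" "last \<gamma> = y" by blast
    moreover have "\<gamma> \<noteq> []" using Plen[OF \<open>P \<gamma>\<close>] by auto
    ultimately show "g y = y" unfolding P_def by (metis last_in_set)
  qed
  then show ?thesis using Aut_id[OF gA] by blast
qed

end


lemma dcount: assumes "\<And>e. e \<in> X \<Longrightarrow> e \<subseteq> V \<and> card e = 2"
  shows "(\<Sum>z\<in>V. card {e\<in>X. z \<in> e}) = 2 * card X"
proof -
  have fX: "finite X"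
  proof (rule finite_subset[of X "Pow V"])
    show "X \<subseteq> Pow V" using assms by auto
    show "finite (Pow V)" using finV by simp
  qed
  have "(\<Sum>z\<in>V. card {e\<in>X. z \<in> e}) = (\<Sum>z\<in>V. \<Sum>e\<in>X. (if z \<in> e then 1 else 0))"
  proof (rule sum.cong[OF refl])
    fix z show "card {e\<in>X. z \<in> e} = (\<Sum>e\<in>X. (if z \<in> e then 1 else 0))"
      using fX by (simp add: sum.If_cases Int_def)
  qed
  also have "\<dots> = (\<Sum>e\<in>X. \<Sum>z\<in>V. (if z \<in> e then 1 else 0))" by (rule sum.swap)
  also have "\<dots> = (\<Sum>e\<in>X. 2)"
  proof (rule sum.cong[OF refl])
    fix e assume "e \<in> X"
    then have "e \<subseteq> V" "card e = 2" using assms by auto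
    then have "V \<inter> e = e" by auto
    then show "(\<Sum>z\<in>V. (if z \<in> e then 1 else 0)) = (2::nat)"
      using finV \<open>card e = 2\<close> by (simp add: sum.If_cases)
  qed
  finally show ?thesis by simp
qed

lemma inc_card: assumes "z \<in> V" "Q z"
  shows "card {e \<in> {{a, b} | a b. a \<in> V \<and> b \<in> V \<and> E a b \<and> Q a \<and> Q b}. z \<in> e}
         = card {w. E z w \<and> Q w}"
proof -
  let ?X = "{e \<in> {{a, b} | a b. a \<in> V \<and> b \<in> V \<and> E a b \<and> Q a \<and> Q b}. z \<in> e}"
  have "bij_betw (\<lambda>w. {z, w}) {w. E z w \<and> Q w} ?X"
  proof (rule bij_betw_imageI)
    show "inj_on (\<lambda>w. {z, w}) {w. E z w \<and> Q w}"
    proof (rule inj_onI)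
      fix w1 w2 assume "w1 \<in> {w. E z w \<and> Q w}" "w2 \<in> {w. E z w \<and> Q w}" "{z, w1} = {z, w2}"
      then show "w1 = w2" using Eirr by (auto simp: doubleton_eq_iff)
    qed
    show "(\<lambda>w. {z, w}) ` {w. E z w \<and> Q w} = ?X"
    proof
      show "(\<lambda>w. {z, w}) ` {w. E z w \<and> Q w} \<subseteq> ?X" using assms EV by blast
      show "?X \<subseteq> (\<lambda>w. {z, w}) ` {w. E z w \<and> Q w}"
      proof
        fix e assume "e \<in> ?X"
        then obtain a b where e: "e = {a,b}" "E a b" "Q a" "Q b" "z \<in> e" by blast
        show "e \<in> (\<lambda>w. {z, w}) ` {w. E z w \<and> Q w}"
        proof (cases "z = a")
          case True then show ?thesis using e by blast
        next
          case False then have "z = b" using e by auto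
          then have "e = {z, a}" "E z a" using e Esym by auto
          then show ?thesis using e by blast
        qed
      qed
    qed
  qed
  then show ?thesis by (simp add: bij_betw_same_card)
qed

lemma edge_sub: "e \<in> edges V E \<Longrightarrow> e \<subseteq> V \<and> card e = 2"
proof -
  assume "e \<in> edges V E"
  then obtain a b where "e = {a,b}" "E a b" by (auto simp: edges_def)
  moreover have "a \<noteq> b" using \<open>E a b\<close> Eirr by auto
  ultimately show ?thesis using EV by auto
qed

lemma edges_card: "2 * card (edges V E) = 3 * card V"
proof -
  have eq: "edges V E = {{a, b} | a b. a \<in> V \<and> b \<in> V \<and> E a b \<and> True \<and> True}"
    by (simp add: edges_def)
  have "\<And>e. e \<in> edges V E \<Longrightarrow> e \<subseteq> V \<and> card e = 2" by (rule edge_sub)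
  then have "2 * card (edges V E) = (\<Sum>z\<in>V. card {e\<in>edges V E. z \<in> e})" by (simp add: dcount)
  also have "\<dots> = (\<Sum>z\<in>V. 3)"
  proof (rule sum.cong[OF refl])
    fix z assume "z \<in> V"
    have "card {e\<in>edges V E. z \<in> e} = card {w. E z w \<and> True}"
      unfolding eq by (rule inc_card[OF \<open>z \<in> V\<close>]) simp
    also have "\<dots> = 3" using nb3[OF \<open>z \<in> V\<close>] by (simp add: nbhd_def)
    finally show "card {e\<in>edges V E. z \<in> e} = 3" .
  qed
  finally show ?thesis by simp
qed


lemma edges_fin: "finite (edges V E)"
proof (rule finite_subset[of _ "Pow V"])
  show "edges V E \<subseteq> Pow V" using EV by (auto simp: edges_def)
  show "finite (Pow V)" using finV by simp
qed

context
  fixes g :: "'a \<Rightarrow> 'a"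
  assumes gA: "g \<in> Aut V E"
begin

lemma A_form: "A_edges V E g = {{a, b} | a b. a \<in> V \<and> b \<in> V \<and> E a b \<and> (\<lambda>x. g x = x) a \<and> (\<lambda>x. g x = x) b}"
  by (simp add: A_edges_def)

lemma val_fix: "z \<in> V \<Longrightarrow> g z = z \<Longrightarrow> card {e\<in>A_edges V E g. z \<in> e} = card {w. E z w \<and> g w = w}"
  unfolding A_form by (rule inc_card) auto

lemma val_mov: "g z \<noteq> z \<Longrightarrow> {e\<in>A_edges V E g. z \<in> e} = {}"
  by (auto simp: A_edges_def)

lemma A_sub_edges: "A_edges V E g \<subseteq> edges V E" by (auto simp: A_edges_def edges_def)
lemma F_sub_edges: "F_edges V E g \<subseteq> edges V E" by (auto simp: F_edges_def edges_def)

lemma sumA: "(\<Sum>z\<in>V. card {e\<in>A_edges V E g. z \<in> e}) = 2 * card (A_edges V E g)"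
  by (rule dcount) (use A_sub_edges edge_sub in blast)

lemma F_char: assumes "e \<in> F_edges V E g" "x \<in> e"
  shows "e = {x, g x} \<and> g x \<noteq> x \<and> E x (g x) \<and> x \<in> V"
  using assms Esym by (auto simp: F_edges_def)

lemma F_union: "card (\<Union>(F_edges V E g)) = 2 * card (F_edges V E g)"
proof -
  have "card (\<Union>(F_edges V E g)) = sum card (F_edges V E g)"
  proof (rule card_Union_disjoint)
    show "pairwise disjnt (F_edges V E g)"
      unfolding pairwise_def disjnt_def
    proof (intro ballI impI)
      fix e1 e2 assume "e1 \<in> F_edges V E g" "e2 \<in> F_edges V E g" "e1 \<noteq> e2"
      then show "e1 \<inter> e2 = {}" using F_char by blast
    qed
    show "\<And>e. e \<in> F_edges V E g \<Longrightarrow> finite e" by (auto simp: F_edges_def)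
  qed
  also have "\<dots> = sum (\<lambda>e. 2) (F_edges V E g)"
    by (rule sum.cong[OF refl]) (auto simp: F_edges_def)
  finally show ?thesis by simp
qed

lemma F_union_M: "\<Union>(F_edges V E g) \<subseteq> {x\<in>V. g x \<noteq> x}"
  using F_char by blast

lemma F_le_M: "2 * card (F_edges V E g) \<le> card {x\<in>V. g x \<noteq> x}"
proof -
  have "card (\<Union>(F_edges V E g)) \<le> card {x\<in>V. g x \<noteq> x}"
    by (rule card_mono) (use finV F_union_M in auto)
  then show ?thesis using F_union by simp
qed

lemma fixedE_sub: "{e \<in> edges V E. g ` e = e} \<subseteq> A_edges V E g \<union> F_edges V E g"
proof
  fix e assume "e \<in> {e \<in> edges V E. g ` e = e}"
  then obtain a b where e: "e = {a,b}" "a \<in> V" "b \<in> V" "E a b" "g ` {a,b} = {a,b}" by (auto simp: edges_def)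
  have ab: "a \<noteq> b" using e(4) Eirr by auto
  have "{g a, g b} = {a, b}" using e(5) by simp
  then have "(g a = a \<and> g b = b) \<or> (g a = b \<and> g b = a)" by (auto simp: doubleton_eq_iff)
  then show "e \<in> A_edges V E g \<union> F_edges V E g"
    using e ab by (auto simp: A_edges_def F_edges_def)
qed

lemma COUNT: assumes "fpr_edges V E g > 1/3"
  shows "card V < 2 * card (A_edges V E g) + 2 * card (F_edges V E g)"
proof -
  let ?X = "{e \<in> edges V E. g ` e = e}"
  have fe: "fpr_edges V E g = real (card ?X) / real (card (edges V E))" by (simp only: fpr_edges_def)
  have pos: "card (edges V E) \<noteq> 0"
  proof
    assume "card (edges V E) = 0"
    then have "fpr_edges V E g = 0" unfolding fe by simp
    with assms show False by simp
  qed
  have "1/3 < real (card ?X) / real (card (edges V E))" using assms fe by simp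
  moreover have "real (card (edges V E)) > 0" using pos by simp
  ultimately have "1/3 * real (card (edges V E)) < real (card ?X)" by (simp only: pos_less_divide_eq)
  then have "real (card (edges V E)) < real (3 * card ?X)" by simp
  then have c1: "3 * card ?X > card (edges V E)" by (simp only: of_nat_less_iff)
  have fin: "finite (A_edges V E g \<union> F_edges V E g)"
    by (rule finite_subset[OF _ edges_fin]) (rule Un_least[OF A_sub_edges F_sub_edges])
  have "card ?X \<le> card (A_edges V E g \<union> F_edges V E g)" by (rule card_mono[OF fin fixedE_sub])
  also have "\<dots> \<le> card (A_edges V E g) + card (F_edges V E g)" by (rule card_Un_le)
  finally have "3 * card ?X \<le> 3 * (card (A_edges V E g) + card (F_edges V E g))" by simp
  then have "3 * (card (A_edges V E g) + card (F_edges V E g)) > card (edges V E)" using c1 by linarith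
  then have "3 * card V < 3 * (2 * card (A_edges V E g) + 2 * card (F_edges V E g))"
    using edges_card by (simp add: algebra_simps)
  then show ?thesis by simp
qed

end


lemma arc1: "E a b \<Longrightarrow> [a,b] \<in> arcs V E 1"
  using EV by (auto simp: arcs_iff)

lemma arc2: "E a b \<Longrightarrow> E b c \<Longrightarrow> a \<noteq> c \<Longrightarrow> [a,b,c] \<in> arcs V E 2"
  using EV by (auto simp: arcs_iff less_Suc_eq numeral_eq_Suc)

lemma arc3: "E a b \<Longrightarrow> E b c \<Longrightarrow> E c d \<Longrightarrow> a \<noteq> c \<Longrightarrow> b \<noteq> d \<Longrightarrow> [a,b,c,d] \<in> arcs V E 3"
  using EV by (auto simp: arcs_iff less_Suc_eq numeral_eq_Suc le_Suc_eq)

lemma arc4: "E a b \<Longrightarrow> E b c \<Longrightarrow> E c d \<Longrightarrow> E d e \<Longrightarrow> a \<noteq> c \<Longrightarrow> b \<noteq> d \<Longrightarrow> c \<noteq> e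
   \<Longrightarrow> [a,b,c,d,e] \<in> arcs V E 4"
  using EV by (auto simp: arcs_iff less_Suc_eq numeral_eq_Suc le_Suc_eq)


lemma NoTri: assumes "arc_transitive V E 3" "E a b" "E b c" "E c a" shows False
proof -
  have ac: "a \<noteq> c" using assms(4) Eirr by auto
  have ba: "b \<noteq> a" using assms(2) Eirr by auto
  have "c \<in> V" using assms(3) EV by auto
  then obtain t where t: "E c t" "t \<noteq> a" "t \<noteq> b" using nb_third by blast
  have 1: "[a,b,c,a] \<in> arcs V E 3" using arc3[OF assms(2,3,4) ac ba] .
  have 2: "[a,b,c,t] \<in> arcs V E 3" using arc3[OF assms(2,3) t(1) ac] t(3) by auto
  obtain h where "map h [a,b,c,a] = [a,b,c,t]" using assms(1) 1 2 unfolding arc_transitive_def by blast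
  then show False using t(2) by auto
qed

lemma NoSq: assumes "arc_transitive V E 4" "E a b" "E b c" "E c d" "E d a" "a \<noteq> c" "b \<noteq> d"
  shows False
proof -
  have "d \<in> V" using assms(4) EV by auto
  then obtain t where t: "E d t" "t \<noteq> a" "t \<noteq> c" using nb_third by blast
  have 1: "[a,b,c,d,a] \<in> arcs V E 4" using arc4[OF assms(2,3,4,5,6,7)] assms(6) by auto
  have 2: "[a,b,c,d,t] \<in> arcs V E 4" using arc4[OF assms(2,3,4) t(1) assms(6,7)] t(3) by auto
  obtain h where "map h [a,b,c,d,a] = [a,b,c,d,t]" using assms(1) 1 2 unfolding arc_transitive_def by blast
  then show False using t(2) by auto
qed

lemma Close3: assumes "arc_transitive V E 3" "[a0,b0,c0,d0] \<in> arcs V E 3" "E d0 a0"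
  "E a b" "E b c" "E c d" "a \<noteq> c" "b \<noteq> d" shows "E a d"
proof -
  have "[a,b,c,d] \<in> arcs V E 3" by (rule arc3[OF assms(4-8)])
  then obtain h where h: "h \<in> Aut V E" "map h [a0,b0,c0,d0] = [a,b,c,d]"
    using assms(1,2) unfolding arc_transitive_def by blast
  have "E (h d0) (h a0)" using Aut_E[OF h(1) assms(3)] .
  then show ?thesis using h(2) Esym by simp
qed

lemma REG': assumes "s \<ge> 1" "arc_transitive V E s" "\<not> arc_transitive V E (s + 1)" "g \<in> Aut V E"
  "\<alpha> \<in> arcs V E s" "\<forall>z\<in>set \<alpha>. g z = z" shows "g = id"
  using REG[OF assms(1-4)] assms(5,6) P_def[OF assms(1-4)] by blast


lemma nb_eq: assumes "a \<in> V" "E a p" "E a q" "E a r" "p \<noteq> q" "p \<noteq> r" "q \<noteq> r" "E a b"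
  shows "b \<in> {p,q,r}"
proof -
  have "{p,q,r} \<subseteq> nbhd E a" using assms by auto
  moreover have "card {p,q,r} = 3" using assms(5-7) by simp
  ultimately have "{p,q,r} = nbhd E a" using nb3[OF assms(1)] nbfin[OF assms(1)] by (metis card_seteq order_refl)
  then show ?thesis using assms(8) by auto
qed

lemma sum_count: "(\<Sum>z\<in>V. (if Q z then 1 else 0)) = card {z\<in>V. Q z}"
  using finV by (simp add: sum.If_cases Int_def)

lemma card_split: "card V = card {z\<in>V. g z = z} + card {z\<in>V. g z \<noteq> z}"
proof -
  have "V = {z\<in>V. g z = z} \<union> {z\<in>V. g z \<noteq> z}" by auto
  then have "card V = card ({z\<in>V. g z = z} \<union> {z\<in>V. g z \<noteq> z})" by simp
  also have "\<dots> = card {z\<in>V. g z = z} + card {z\<in>V. g z \<noteq> z}"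
    by (rule card_Un_disjoint) (use finV in auto)
  finally show ?thesis .
qed

lemma K33: assumes gA: "g \<in> Aut V E" and t3: "arc_transitive V E 3"
  and v: "v \<in> V" "g v = v" and w: "E v w" "g w = w" and x: "E v x" "g x \<noteq> x"
  and v': "v' \<noteq> v" "g v' = v'" "E v' x" "E v' (g x)"
  shows "2 * card (A_edges V E g) + 2 * card (F_edges V E g) \<le> card V"
proof -
  define y where "y = g x"
  have vy: "E v y" using Aut_E[OF gA x(1)] v(2) by (simp add: y_def)
  have xy: "x \<noteq> y" using x(2) by (simp add: y_def)
  have gy: "g y \<noteq> y" using x(2) Aut_inj[OF gA] by (simp add: y_def)
  have v'y: "E v' y" using v'(4) by (simp add: y_def)
  have wx: "w \<noteq> x" using w(2) x(2) by auto
  have wy: "w \<noteq> y" using w(2) gy by auto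
  have wit: "[x, v, y, v'] \<in> arcs V E 3" using arc3[OF Esym[OF x(1)] vy Esym[OF v'y] xy] v'(1) by simp
  note C = Close3[OF t3 wit v'(3)]
  have xV: "x \<in> V" using x(1) EV by auto
  obtain q where q: "E x q" "q \<noteq> v" "q \<noteq> v'" using nb_third[OF xV] by blast
  have v'w: "E v' w" using C[OF v'(3) Esym[OF x(1)] w(1) v'(1) wx[symmetric]] .
  have qy: "E q y" using C[OF Esym[OF q(1)] Esym[OF x(1)] vy q(2) xy] .
  have qw: "E q w" using C[OF Esym[OF q(1)] Esym[OF x(1)] w(1) q(2) wx[symmetric]] .
  have V': "v' \<in> V" "y \<in> V" "w \<in> V" "q \<in> V" using v'(3) vy w(1) q(1) EV by auto
  have nv: "\<And>b. E v b \<Longrightarrow> b \<in> {x,y,w}" using nb_eq[OF v(1) x(1) vy w(1) xy wx[symmetric] wy[symmetric]] .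
  have nv': "\<And>b. E v' b \<Longrightarrow> b \<in> {x,y,w}" using nb_eq[OF V'(1) v'(3) v'y v'w xy wx[symmetric] wy[symmetric]] .
  have nx: "\<And>b. E x b \<Longrightarrow> b \<in> {v,v',q}"
    using nb_eq[OF xV Esym[OF x(1)] Esym[OF v'(3)] q(1) v'(1)[symmetric] q(2)[symmetric] q(3)[symmetric]] .
  have ny: "\<And>b. E y b \<Longrightarrow> b \<in> {v,v',q}"
    using nb_eq[OF V'(2) Esym[OF vy] Esym[OF v'y] Esym[OF qy] v'(1)[symmetric] q(2)[symmetric] q(3)[symmetric]] .
  have nw: "\<And>b. E w b \<Longrightarrow> b \<in> {v,v',q}"
    using nb_eq[OF V'(3) Esym[OF w(1)] Esym[OF v'w] Esym[OF qw] v'(1)[symmetric] q(2)[symmetric] q(3)[symmetric]] .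
  have nq: "\<And>b. E q b \<Longrightarrow> b \<in> {x,y,w}"
    using nb_eq[OF V'(4) Esym[OF q(1)] qy qw xy wx[symmetric] wy[symmetric]] .
  define S where "S = {v,v',w,q,x,y}"
  have VS: "V \<subseteq> S"
  proof
    fix z assume "z \<in> V"
    then have "E\<^sup>*\<^sup>* v z" using conn v(1) by (simp add: connected_graph_def)
    then show "z \<in> S"
    proof (induction rule: rtranclp_induct)
      case base then show ?case by (simp add: S_def)
    next
      case (step a b)
      then show ?case using nv nv' nx ny nw nq unfolding S_def by blast
    qed
  qed
  have gq: "g q = q"
  proof -
    have "E y (g q)" using Aut_E[OF gA q(1)] by (simp add: y_def)
    then have "g q \<in> {v,v',q}" by (rule ny)
    moreover have "g q \<noteq> v" using Aut_inj[OF gA, of q v] v(2) q(2) by simp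
    moreover have "g q \<noteq> v'" using Aut_inj[OF gA, of q v'] v'(2) q(3) by simp
    ultimately show ?thesis by simp
  qed
  have mov: "\<And>z. z \<in> V \<Longrightarrow> g z \<noteq> z \<Longrightarrow> z \<in> {x,y}"
    using VS v(2) v'(2) w(2) gq unfolding S_def by auto
  have F0: "F_edges V E g = {}"
  proof (rule ccontr)
    assume "F_edges V E g \<noteq> {}"
    then obtain e where e: "e \<in> F_edges V E g" by blast
    then obtain a where a: "a \<in> e" by (auto simp: F_edges_def)
    have c: "e = {a, g a}" "g a \<noteq> a" "E a (g a)" "a \<in> V" using F_char[OF gA e a] by auto
    have ga: "g a \<in> V" using c(3) EV by auto
    have gga: "g (g a) \<noteq> g a" using c(2) Aut_inj[OF gA] by simp
    have "a \<in> {x,y}" using mov[OF c(4) c(2)] .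
    moreover have "g a \<in> {x,y}" using mov[OF ga gga] .
    ultimately have "E x y" using c(2,3) Esym by auto
    then show False using NoTri[OF t3 x(1) _ Esym[OF vy]] by blast
  qed
  have val: "\<And>z. z \<in> V \<Longrightarrow> card {e\<in>A_edges V E g. z \<in> e} \<le> (if g z = z then 1 else 0) + (if z = w then 2 else 0)"
  proof -
    fix z assume zV: "z \<in> V"
    show "card {e\<in>A_edges V E g. z \<in> e} \<le> (if g z = z then 1 else 0) + (if z = w then 2 else 0)"
    proof (cases "g z = z")
      case False
      then have "{e\<in>A_edges V E g. z \<in> e} = {}" by (rule val_mov[OF gA])
      then have c0: "card {e\<in>A_edges V E g. z \<in> e} = 0" by (simp only: card.empty)
      show ?thesis by (simp only: c0)
    next
      case True
      have eq: "card {e\<in>A_edges V E g. z \<in> e} = card {u. E z u \<and> g u = u}" by (rule val_fix[OF gA zV True])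
      show ?thesis
      proof (cases "z = w")
        case True
        have "{u. E z u \<and> g u = u} \<subseteq> nbhd E z" by auto
        then have "card {u. E z u \<and> g u = u} \<le> 3" using nb3[OF zV] nbfin[OF zV] card_mono by metis
        then show ?thesis using eq True \<open>g z = z\<close> by simp
      next
        case False
        have "z \<in> {v, v', q}" using VS zV \<open>g z = z\<close> x(2) gy False unfolding S_def by auto
        then have "\<And>u. E z u \<Longrightarrow> u \<in> {x,y,w}" using nv nv' nq by blast
        then have "{u. E z u \<and> g u = u} \<subseteq> {w}" using x(2) gy by auto
        then have "card {u. E z u \<and> g u = u} \<le> card {w}" by (rule card_mono[rotated]) simp
        then have "card {u. E z u \<and> g u = u} \<le> 1" by simp
        then show ?thesis using eq False \<open>g z = z\<close> by simp
      qed
    qed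
  qed
  have "2 * card (A_edges V E g) = (\<Sum>z\<in>V. card {e\<in>A_edges V E g. z \<in> e})" using sumA[OF gA] by simp
  also have "\<dots> \<le> (\<Sum>z\<in>V. (if g z = z then 1 else 0) + (if z = w then 2 else 0))"
    by (rule sum_mono) (rule val)
  also have "\<dots> = card {z\<in>V. g z = z} + 2"
    using V'(3) finV by (simp add: sum.distrib sum_count)
  finally have A2: "2 * card (A_edges V E g) \<le> card {z\<in>V. g z = z} + 2" .
  have "{x,y} \<subseteq> {z\<in>V. g z \<noteq> z}" using xV V'(2) x(2) gy by (auto simp: y_def)
  then have "card {x,y} \<le> card {z\<in>V. g z \<noteq> z}" by (rule card_mono[rotated]) (use finV in auto)
  then have "2 \<le> card {z\<in>V. g z \<noteq> z}" using xy by simp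
  then show ?thesis using A2 F0 card_split[of g] by simp
qed


lemma S2count: assumes gA: "g \<in> Aut V E"
  and h: "\<And>z. z \<in> V \<Longrightarrow> g z = z \<Longrightarrow> card {u. E z u \<and> g u = u} \<le> 1"
  shows "2 * card (A_edges V E g) + 2 * card (F_edges V E g) \<le> card V"
proof -
  have val: "\<And>z. z \<in> V \<Longrightarrow> card {e\<in>A_edges V E g. z \<in> e} \<le> (if g z = z then 1 else 0)"
  proof -
    fix z assume zV: "z \<in> V"
    show "card {e\<in>A_edges V E g. z \<in> e} \<le> (if g z = z then 1 else 0)"
    proof (cases "g z = z")
      case False
      then have "{e\<in>A_edges V E g. z \<in> e} = {}" by (rule val_mov[OF gA])
      then have c0: "card {e\<in>A_edges V E g. z \<in> e} = 0" by (simp only: card.empty)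
      show ?thesis by (simp only: c0)
    next
      case True
      then show ?thesis using val_fix[OF gA zV True] h[OF zV True] by simp
    qed
  qed
  have "2 * card (A_edges V E g) = (\<Sum>z\<in>V. card {e\<in>A_edges V E g. z \<in> e})" using sumA[OF gA] by simp
  also have "\<dots> \<le> (\<Sum>z\<in>V. (if g z = z then 1 else 0))"
    by (rule sum_mono) (rule val)
  also have "\<dots> = card {z\<in>V. g z = z}" by (rule sum_count)
  finally show ?thesis using F_le_M[OF gA] card_split[of g] by simp
qed

lemma two_elems: assumes "finite S" "\<not> card S \<le> 1" shows "\<exists>a b. a \<in> S \<and> b \<in> S \<and> a \<noteq> b"
  using assms card_le_Suc0_iff_eq[OF assms(1)] by auto

lemma caseI: assumes gA: "g \<in> Aut V E"
  and H1: "\<And>v x w. v \<in> V \<Longrightarrow> g v = v \<Longrightarrow> E v w \<Longrightarrow> g w = w \<Longrightarrow> E v x \<Longrightarrow> g x \<noteq> x \<Longrightarrow> \<not> E x (g x)"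
  and H2: "\<And>v v' x w. v \<in> V \<Longrightarrow> g v = v \<Longrightarrow> E v w \<Longrightarrow> g w = w \<Longrightarrow> E v x \<Longrightarrow> g x \<noteq> x \<Longrightarrow>
             v' \<noteq> v \<Longrightarrow> g v' = v' \<Longrightarrow> E v' x \<Longrightarrow> E v' (g x) \<Longrightarrow> False"
  shows "2 * card (F_edges V E g) + 3 * card (Vi V E g 1) + card (Vi V E g 3) \<le> card V"
proof -
  define V1 where "V1 = Vi V E g 1"
  define V3 where "V3 = Vi V E g 3"
  define M where "M = {z\<in>V. g z \<noteq> z}"
  define Fx where "Fx = {z\<in>V. g z = z}"
  define Pm where "Pm z = {u. E z u \<and> g u \<noteq> u}" for z
  have inA: "\<And>z e. e \<in> A_edges V E g \<Longrightarrow> z \<in> e \<Longrightarrow> g z = z" by (auto simp: A_edges_def)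
  have V1D: "\<And>z. z \<in> V1 \<Longrightarrow> z \<in> V \<and> g z = z \<and> card {u. E z u \<and> g u = u} = 1"
  proof -
    fix z assume "z \<in> V1"
    then have z: "z \<in> V" "\<exists>e\<in>A_edges V E g. z \<in> e" "card {e\<in>A_edges V E g. z \<in> e} = 1"
      by (auto simp: V1_def Vi_def fix_valency_def)
    then have "g z = z" using inA by blast
    then show "z \<in> V \<and> g z = z \<and> card {u. E z u \<and> g u = u} = 1" using z val_fix[OF gA z(1)] by simp
  qed
  have V3D: "\<And>z. z \<in> V3 \<Longrightarrow> z \<in> V \<and> g z = z"
    using inA by (auto simp: V3_def Vi_def)
  have V13: "V1 \<inter> V3 = {}" by (auto simp: V1_def V3_def Vi_def)
  have Pm2: "\<And>z. z \<in> V1 \<Longrightarrow> card (Pm z) = 2"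
  proof -
    fix z assume z: "z \<in> V1"
    then have zV: "z \<in> V" and c1: "card {u. E z u \<and> g u = u} = 1" using V1D by auto
    have "nbhd E z = {u. E z u \<and> g u = u} \<union> Pm z" by (auto simp: Pm_def)
    moreover have "finite (nbhd E z)" using nbfin[OF zV] .
    ultimately have "card (nbhd E z) = card {u. E z u \<and> g u = u} + card (Pm z)"
      by (metis (no_types, lifting) card_Un_disjoint disjoint_iff finite_Un mem_Collect_eq Pm_def)
    then show "card (Pm z) = 2" using nb3[OF zV] c1 by simp
  qed
  have Pmfin: "\<And>z. finite (Pm z)"
    by (rule finite_subset[OF _ finV]) (auto simp: Pm_def dest: EV)
  have fixnb: "\<And>z. z \<in> V1 \<Longrightarrow> \<exists>w. E z w \<and> g w = w"
  proof -
    fix z assume "z \<in> V1"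
    then have "card {u. E z u \<and> g u = u} = 1" using V1D by auto
    then have "{u. E z u \<and> g u = u} \<noteq> {}" by (metis card.empty zero_neq_one)
    then show "\<exists>w. E z w \<and> g w = w" by auto
  qed
  have disj: "\<forall>i\<in>V1. \<forall>j\<in>V1. i \<noteq> j \<longrightarrow> Pm i \<inter> Pm j = {}"
  proof (intro ballI impI)
    fix i j assume i: "i \<in> V1" and j: "j \<in> V1" and ij: "i \<noteq> j"
    show "Pm i \<inter> Pm j = {}"
    proof (rule ccontr)
      assume "Pm i \<inter> Pm j \<noteq> {}"
      then obtain x where x: "E i x" "E j x" "g x \<noteq> x" by (auto simp: Pm_def)
      obtain w where w: "E i w" "g w = w" using fixnb[OF i] by blast
      have gj: "g j = j" using V1D[OF j] by simp
      have "E j (g x)" using Aut_E[OF gA x(2)] gj by simp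
      then show False using H2[of i w x j] V1D[OF i] gj w x ij by blast
    qed
  qed
  have disjF: "\<Union>(F_edges V E g) \<inter> \<Union>(Pm ` V1) = {}"
  proof (rule ccontr)
    assume "\<Union>(F_edges V E g) \<inter> \<Union>(Pm ` V1) \<noteq> {}"
    then obtain x e z where xe: "e \<in> F_edges V E g" "x \<in> e" "z \<in> V1" "x \<in> Pm z" by blast
    have "E x (g x)" using F_char[OF gA xe(1,2)] by simp
    moreover obtain w where w: "E z w" "g w = w" using fixnb[OF xe(3)] by blast
    ultimately show False using H1[of z w x] V1D[OF xe(3)] xe(4) by (auto simp: Pm_def)
  qed
  have finV1: "finite V1" using V1D finV by (metis finite_subset subsetI)
  have cUP: "card (\<Union>(Pm ` V1)) = 2 * card V1"
  proof -
    have "card (\<Union>(Pm ` V1)) = (\<Sum>z\<in>V1. card (Pm z))"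
      by (rule card_UN_disjoint[OF finV1]) (use Pmfin disj in auto)
    also have "\<dots> = (\<Sum>z\<in>V1. 2)" by (rule sum.cong[OF refl]) (rule Pm2)
    finally show ?thesis by simp
  qed
  have finUF: "finite (\<Union>(F_edges V E g))"
    by (rule finite_subset[OF F_union_M[OF gA]]) (use finV in auto)
  have finUP: "finite (\<Union>(Pm ` V1))" using finV1 Pmfin by blast
  have "card (\<Union>(F_edges V E g) \<union> \<Union>(Pm ` V1)) = 2 * card (F_edges V E g) + 2 * card V1"
    using card_Un_disjoint[OF finUF finUP disjF] F_union[OF gA] cUP by simp
  moreover have "\<Union>(F_edges V E g) \<union> \<Union>(Pm ` V1) \<subseteq> M"
    using F_union_M[OF gA] unfolding M_def Pm_def by (auto dest: EV)
  ultimately have c1: "2 * card (F_edges V E g) + 2 * card V1 \<le> card M"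
    by (metis card_mono finV M_def finite_subset mem_Collect_eq subsetI)
  have "V1 \<union> V3 \<subseteq> Fx" using V1D V3D by (auto simp: Fx_def)
  then have "card (V1 \<union> V3) \<le> card Fx" by (rule card_mono[rotated]) (simp add: Fx_def finV)
  moreover have "card (V1 \<union> V3) = card V1 + card V3"
    by (rule card_Un_disjoint) (use finV1 V3D finV V13 in \<open>auto intro: finite_subset\<close>)
  ultimately have c2: "card V1 + card V3 \<le> card Fx" by simp
  have "card V = card Fx + card M" using card_split[of g] by (simp add: Fx_def M_def)
  then show ?thesis using c1 c2 by (simp add: V1_def V3_def)
qed

end

theorem lemma5p1:
  fixes V :: "'a set" and E :: "'a \<Rightarrow> 'a \<Rightarrow> bool" and g :: "'a \<Rightarrow> 'a"
    and v :: 'a and s :: nat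
  assumes "simple_graph V E" and "connected_graph V E" and "cubic V E"
    and "vertex_transitive V E"
    and "v \<in> V"
    and "\<forall>u\<in>nbhd E v. \<forall>w\<in>nbhd E v. \<exists>h\<in>Aut V E. h v = v \<and> h u = w"
    and "s \<ge> 1" and "arc_transitive V E s" and "\<not> arc_transitive V E (s + 1)"
    and "g \<in> Aut V E" and "g \<noteq> id"
    and "fpr_edges V E g > 1 / 3"
  shows "2 * card (F_edges V E g) + 3 * card (Vi V E g 1) + card (Vi V E g 3) \<le> card V"
proof -
  interpret cg V E using assms(1-3) by unfold_locales
  note gA = assms(10)
  note s1 = assms(7) and tr = assms(8) and ntr = assms(9)
  have CNT: "card V < 2 * card (A_edges V E g) + 2 * card (F_edges V E g)" by (rule COUNT[OF gA assms(12)])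
  show ?thesis
  proof (cases "(\<forall>v x w. v \<in> V \<longrightarrow> g v = v \<longrightarrow> E v w \<longrightarrow> g w = w \<longrightarrow> E v x \<longrightarrow> g x \<noteq> x \<longrightarrow> \<not> E x (g x))
     \<and> (\<forall>v v' x w. v \<in> V \<longrightarrow> g v = v \<longrightarrow> E v w \<longrightarrow> g w = w \<longrightarrow> E v x \<longrightarrow> g x \<noteq> x \<longrightarrow>
             v' \<noteq> v \<longrightarrow> g v' = v' \<longrightarrow> E v' x \<longrightarrow> E v' (g x) \<longrightarrow> False)")
    case True
    then show ?thesis using caseI[OF gA] by blast
  next
    case False
    then obtain v0 x w where b: "v0 \<in> V" "g v0 = v0" "E v0 w" "g w = w" "E v0 x" "g x \<noteq> x"
      and bad: "E x (g x) \<or> (\<exists>v'. v' \<noteq> v0 \<and> g v' = v' \<and> E v' x \<and> E v' (g x))"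
      by blast
    have vgx: "E v0 (g x)" using Aut_E[OF gA b(5)] b(2) by simp
    have "s \<noteq> 1"
    proof
      assume "s = 1"
      have "[v0, w] \<in> arcs V E 1" by (rule arc1[OF b(3)])
      then have "g = id" using REG'[OF s1 tr ntr gA, of "[v0,w]"] \<open>s = 1\<close> b(2,4) by auto
      with assms(11) show False by simp
    qed
    show ?thesis
    proof (cases "s = 2")
      case True
      have "\<And>z. z \<in> V \<Longrightarrow> g z = z \<Longrightarrow> card {u. E z u \<and> g u = u} \<le> 1"
      proof (rule ccontr)
        fix z assume z: "z \<in> V" "g z = z" and nc: "\<not> card {u. E z u \<and> g u = u} \<le> 1"
        have "finite {u. E z u \<and> g u = u}" by (rule finite_subset[OF _ nbfin[OF z(1)]]) auto
        then obtain u1 u2 where u: "E z u1" "g u1 = u1" "E z u2" "g u2 = u2" "u1 \<noteq> u2"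
          using two_elems nc by blast
        have "[u1, z, u2] \<in> arcs V E 2" by (rule arc2[OF Esym[OF u(1)] u(3) u(5)])
        then have "g = id" using REG'[OF s1 tr ntr gA, of "[u1,z,u2]"] True z(2) u(2,4) by auto
        with assms(11) show False by simp
      qed
      then have "2 * card (A_edges V E g) + 2 * card (F_edges V E g) \<le> card V" by (rule S2count[OF gA])
      with CNT show ?thesis by simp
    next
      case False
      then have s3: "s \<ge> 3" using s1 \<open>s \<noteq> 1\<close> by simp
      have t3: "arc_transitive V E 3" by (rule trans_le[OF tr s3])
      show ?thesis
      proof (cases "E x (g x)")
        case True
        then show ?thesis using NoTri[OF t3 b(5) True Esym[OF vgx]] by simp
      next
        case False
        then obtain v' where v': "v' \<noteq> v0" "g v' = v'" "E v' x" "E v' (g x)" using bad by blast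
        have xgx: "x \<noteq> g x" using b(6) by simp
        show ?thesis
        proof (cases "s = 3")
          case True
          have "2 * card (A_edges V E g) + 2 * card (F_edges V E g) \<le> card V"
            by (rule K33[OF gA t3 b(1,2) b(3,4) b(5,6) v'])
          with CNT show ?thesis by simp
        next
          case False
          then have t4: "arc_transitive V E 4" using trans_le[OF tr] s3 by simp
          have "False" by (rule NoSq[OF t4 Esym[OF b(5)] vgx Esym[OF v'(4)] v'(3) xgx v'(1)[symmetric]])
          then show ?thesis by simp
        qed
      qed
    qed
  qed
qed

end
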